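(* For every integer $n$, $$F_n^3=\frac{F_{n-1}F_{n+1}F_{n+2}+F_{n-2}F_{n-1}F_{n+1}}{6}+\frac{F_{n-2}F_{n+1}F_{n+2}-F_{n-2}F_{n-1}F_{n+2}}{2}.$$
   Context: $F_n$ denotes the Fibonacci numbers: $F_0=0,F_1=1$, $F_{n+1}=F_n+F_{n-1}$ for all $n\in\mathbb{Z}$ (so $F_{-m}=(-1)^{m+1}F_m$). *)

theory Defs
  imports Complex_Main "HOL-Number_Theory.Fib"
begin

definition fibz :: "int \<Rightarrow> int" where
  "fibz n = (if n \<ge> 0 then int (fib (nat n))
             else (-1) ^ (nat (-n) + 1) * int (fib (nat (-n))))"

end

theory Submission
  imports Defs
begin

lemma fibz_rec: "fibz (n+2) = fibz (n+1) + fibz n"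
proof (cases "n \<ge> 0")
  case True
  then have "nat (n+2) = Suc (Suc (nat n))" "nat (n+1) = Suc (nat n)" by auto
  then show ?thesis using True by (simp add: fibz_def)
next
  case False
  show ?thesis
  proof (cases "n = -1")
    case True then show ?thesis by (simp add: fibz_def)
  next
    case F2: False
    define m where "m = nat (-n) - 2"
    have m: "nat (-n) = Suc (Suc m)" using False F2 unfolding m_def by auto
    have m1: "nat (-(n+1)) = Suc m" using False F2 unfolding m_def by auto
    have m2: "nat (-(n+2)) = m" using False F2 unfolding m_def by auto
    show ?thesis
    proof (cases "n = -2")
      case True then show ?thesis by (simp add: fibz_def)
    next
      case False
      with F2 \<open>\<not> 0 \<le> n\<close> have "\<not> 0 \<le> n+2" "\<not> 0 \<le> n+1" by auto
      then show ?thesis using \<open>\<not> 0 \<le> n\<close>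
        by (simp add: fibz_def m m1 m2 minus_minus[symmetric] del: minus_add_distrib) (simp add: algebra_simps)
    qed
  qed
qed

theorem proposition2p5:
  fixes n :: int
  shows "(real_of_int (fibz n)) ^ 3 =
    real_of_int (fibz (n-1) * fibz (n+1) * fibz (n+2) + fibz (n-2) * fibz (n-1) * fibz (n+1)) / 6
  + real_of_int (fibz (n-2) * fibz (n+1) * fibz (n+2) - fibz (n-2) * fibz (n-1) * fibz (n+2)) / 2"
proof -
  define a where "a = fibz (n-2)"
  define b where "b = fibz (n-1)"
  have c: "fibz n = a + b" using fibz_rec[of "n-2"] unfolding a_def b_def by simp
  have d: "fibz (n+1) = a + 2*b" using fibz_rec[of "n-1"] c unfolding b_def by (simp add: add.commute)
  have e: "fibz (n+2) = 2*a + 3*b" using fibz_rec[of n] c d by (simp add: add.commute)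
  show ?thesis unfolding c d e a_def[symmetric] b_def[symmetric]
    by (simp add: field_simps power3_eq_cube)
qed

end
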